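(* Let $(E\to M,\rho,\langle\cdot,\cdot\rangle,\circ)$ be a Courant algebroid and $(\mathbf I,\mathbf J,\mathbf K)$ an almost hypercomplex structure on $E$. The following are equivalent: (i) $N_{\mathbf I,\mathbf I}=N_{\mathbf J,\mathbf J}=0$; (ii) $N_{\mathbf I,\mathbf J}=0$; (iii) $N_{\mathbf I,\mathbf I}=N_{\mathbf J,\mathbf J}=N_{\mathbf K,\mathbf K}=N_{\mathbf I,\mathbf J}=N_{\mathbf J,\mathbf K}=N_{\mathbf K,\mathbf I}=0$.
   Context: A Courant algebroid $(E\to M,\rho,\langle\cdot,\cdot\rangle,\circ)$ consists of a real vector bundle $E\to M$ over a smooth manifold, a nondegenerate symmetric fiberwise bilinear pairing $\langle\cdot,\cdot\rangle$ on $E$, a vector bundle map $\rho:E\to TM$ (the anchor), and an $\mathbb R$-bilinear operation $\circ$ on $\Gamma(E)$ (the Dorfman bracket) such that for all $f\in C^\infty(M)$, $x,y,z\in\Gamma(E)$: $x\circ(y\circ z)=(x\circ y)\circ z+y\circ(x\circ z)$; $\rho(x\circ y)=[\rho(x),\rho(y)]$; $x\circ(fy)=(\rho(x)f)y+f(x\circ y)$; $x\circ y+y\circ x=2D\langle x,y\rangle$; $(Df)\circ x=0$; $\rho(x)\langle y,z\rangle=\langle x\circ y,z\rangle+\langle y,x\circ z\rangle$. Here $D:C^\infty(M)\to\Gamma(E)$ is the $\mathbb R$-linear map defined by $\langle Df,x\rangle=\tfrac12\rho(x)f$. For vector bundle endomorphisms $F,G$ of $E$ (over $\mathrm{id}_M$),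 the Nijenhuis concomitant is the tensor $N_{F,G}:E\otimes E\to E$ given by $N_{F,G}(X,Y)=FX\circ GY-F(X\circ GY)-G(FX\circ Y)+FG(X\circ Y)+GX\circ FY-G(X\circ FY)-F(GX\circ Y)+GF(X\circ Y)$. An almost hypercomplex structure on $E$ is a triple $(\mathbf I,\mathbf J,\mathbf K)$ of vector bundle endomorphisms of $E$ over $\mathrm{id}_M$, each orthogonal for $\langle\cdot,\cdot\rangle$, with $\mathbf I^2=\mathbf J^2=\mathbf K^2=\mathbf I\mathbf J\mathbf K=-1$. *)

theory Defs
  imports Main "HOL.Real_Vector_Spaces"
begin

text \<open>Algebraic model of a Courant algebroid E \<rightarrow> M.
  'f plays the role of C-infinity(M) (a commutative real algebra with unit),
  'e plays the role of the space of sections Gamma(E) (a real vector space),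
  sm is the C-infinity(M)-module action f x = f x on sections,
  rho x is the vector field rho(x), acting on functions as a derivation,
  pr is the (fiberwise, hence C-infinity(M)-bilinear) pairing,
  dor is the Dorfman bracket.\<close>

definition Dop :: "('e \<Rightarrow> 'f::{comm_ring_1,real_algebra_1} \<Rightarrow> 'f) \<Rightarrow> ('e \<Rightarrow> 'e \<Rightarrow> 'f) \<Rightarrow> 'f \<Rightarrow> 'e"
  where "Dop rho pr f = (THE d. \<forall>x. pr d x = (1/2) *\<^sub>R rho x f)"

definition courant_algebroid ::
  "('f::{comm_ring_1,real_algebra_1} \<Rightarrow> 'e::real_vector \<Rightarrow> 'e) \<Rightarrow> ('e \<Rightarrow> 'f \<Rightarrow> 'f)
   \<Rightarrow> ('e \<Rightarrow> 'e \<Rightarrow> 'f) \<Rightarrow> ('e \<Rightarrow> 'e \<Rightarrow> 'e) \<Rightarrow> bool"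
  where "courant_algebroid sm rho pr dor \<longleftrightarrow>
    \<comment> \<open>sections form a module over the function algebra, compatible with real scaling\<close>
    (\<forall>f g x. sm (f + g) x = sm f x + sm g x) \<and>
    (\<forall>f x y. sm f (x + y) = sm f x + sm f y) \<and>
    (\<forall>f g x. sm (f * g) x = sm f (sm g x)) \<and>
    (\<forall>x. sm 1 x = x) \<and>
    (\<forall>r x. sm (of_real r) x = r *\<^sub>R x) \<and>
    \<comment> \<open>anchor: a bundle map E \<rightarrow> TM, i.e. function-linear into vector fields (derivations)\<close>
    (\<forall>x y g. rho (x + y) g = rho x g + rho y g) \<and>
    (\<forall>f x g. rho (sm f x) g = f * rho x g) \<and>
    (\<forall>x g h. rho x (g + h) = rho x g + rho x h) \<and>
    (\<forall>x r g. rho x (r *\<^sub>R g) = r *\<^sub>R rho x g) \<and>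
    (\<forall>x g h. rho x (g * h) = g * rho x h + h * rho x g) \<and>
    \<comment> \<open>pairing: symmetric, function-bilinear, nondegenerate\<close>
    (\<forall>x y. pr x y = pr y x) \<and>
    (\<forall>x y z. pr (x + y) z = pr x z + pr y z) \<and>
    (\<forall>f x y. pr (sm f x) y = f * pr x y) \<and>
    (\<forall>x. (\<forall>y. pr x y = 0) \<longrightarrow> x = 0) \<and>
    \<comment> \<open>Dorfman bracket: real-bilinear\<close>
    (\<forall>x y z. dor (x + y) z = dor x z + dor y z) \<and>
    (\<forall>x y z. dor x (y + z) = dor x y + dor x z) \<and>
    (\<forall>r x y. dor (r *\<^sub>R x) y = r *\<^sub>R dor x y) \<and>
    (\<forall>r x y. dor x (r *\<^sub>R y) = r *\<^sub>R dor x y) \<and>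
    \<comment> \<open>D is well defined (guaranteed geometrically by nondegeneracy)\<close>
    (\<forall>f. \<exists>d. \<forall>x. pr d x = (1/2) *\<^sub>R rho x f) \<and>
    \<comment> \<open>Courant algebroid axioms\<close>
    (\<forall>x y z. dor x (dor y z) = dor (dor x y) z + dor y (dor x z)) \<and>
    (\<forall>x y g. rho (dor x y) g = rho x (rho y g) - rho y (rho x g)) \<and>
    (\<forall>x f y. dor x (sm f y) = sm (rho x f) y + sm f (dor x y)) \<and>
    (\<forall>x y. dor x y + dor y x = 2 *\<^sub>R Dop rho pr (pr x y)) \<and>
    (\<forall>f x. dor (Dop rho pr f) x = 0) \<and>
    (\<forall>x y z. rho x (pr y z) = pr (dor x y) z + pr y (dor x z))"

definition bundle_endo :: "('f \<Rightarrow> 'e::ab_group_add \<Rightarrow> 'e) \<Rightarrow> ('e \<Rightarrow> 'e) \<Rightarrow> bool"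
  where "bundle_endo sm F \<longleftrightarrow> (\<forall>x y. F (x + y) = F x + F y) \<and> (\<forall>f x. F (sm f x) = sm f (F x))"

definition orthogonal_endo :: "('e \<Rightarrow> 'e \<Rightarrow> 'f) \<Rightarrow> ('e \<Rightarrow> 'e) \<Rightarrow> bool"
  where "orthogonal_endo pr F \<longleftrightarrow> (\<forall>x y. pr (F x) (F y) = pr x y)"

definition almost_hypercomplex ::
  "('f \<Rightarrow> 'e::ab_group_add \<Rightarrow> 'e) \<Rightarrow> ('e \<Rightarrow> 'e \<Rightarrow> 'f) \<Rightarrow> ('e \<Rightarrow> 'e) \<Rightarrow> ('e \<Rightarrow> 'e) \<Rightarrow> ('e \<Rightarrow> 'e) \<Rightarrow> bool"
  where "almost_hypercomplex sm pr I J K \<longleftrightarrow>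
    bundle_endo sm I \<and> bundle_endo sm J \<and> bundle_endo sm K \<and>
    orthogonal_endo pr I \<and> orthogonal_endo pr J \<and> orthogonal_endo pr K \<and>
    (\<forall>x. I (I x) = - x) \<and> (\<forall>x. J (J x) = - x) \<and> (\<forall>x. K (K x) = - x) \<and>
    (\<forall>x. I (J (K x)) = - x)"

definition nijenhuis :: "('e::ab_group_add \<Rightarrow> 'e \<Rightarrow> 'e) \<Rightarrow> ('e \<Rightarrow> 'e) \<Rightarrow> ('e \<Rightarrow> 'e) \<Rightarrow> 'e \<Rightarrow> 'e \<Rightarrow> 'e"
  where "nijenhuis dor F G X Y =
    dor (F X) (G Y) - F (dor X (G Y)) - G (dor (F X) Y) + F (G (dor X Y))
    + dor (G X) (F Y) - G (dor X (F Y)) - F (dor (G X) Y) + G (F (dor X Y))"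

definition nijenhuis_zero :: "('e::ab_group_add \<Rightarrow> 'e \<Rightarrow> 'e) \<Rightarrow> ('e \<Rightarrow> 'e) \<Rightarrow> ('e \<Rightarrow> 'e) \<Rightarrow> bool"
  where "nijenhuis_zero dor F G \<longleftrightarrow> (\<forall>X Y. nijenhuis dor F G X Y = 0)"

end

theory Submission
  imports Defs
begin

lemma addhom_lemmas:
  fixes F :: "'e::ab_group_add \<Rightarrow> 'e"
  assumes "\<And>x y. F (x + y) = F x + F y"
  shows "F 0 = 0" "\<And>x. F (- x) = - F x" "\<And>x y. F (x - y) = F x - F y"
proof -
  show 0: "F 0 = 0" using assms[of 0 0] by simp
  show m: "\<And>x. F (- x) = - F x" using assms 0 by (metis add.right_inverse add_eq_0_iff)
  show "\<And>x y. F (x - y) = F x - F y" using assms m by (metis diff_conv_add_uminus)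
qed

lemma quat:
  fixes I J K :: "'e::ab_group_add \<Rightarrow> 'e"
  assumes aI: "\<And>x y. I (x + y) = I x + I y"
    and aJ: "\<And>x y. J (x + y) = J x + J y"
    and aK: "\<And>x y. K (x + y) = K x + K y"
    and II: "\<And>x. I (I x) = - x" and JJ: "\<And>x. J (J x) = - x" and KK: "\<And>x. K (K x) = - x"
    and IJK: "\<And>x. I (J (K x)) = - x"
  shows "\<And>x. I (J x) = K x" "\<And>x. J (I x) = - K x" "\<And>x. J (K x) = I x"
        "\<And>x. K (J x) = - I x" "\<And>x. K (I x) = J x" "\<And>x. I (K x) = - J x"
proof -
  note mI = addhom_lemmas(2)[OF aI] and mJ = addhom_lemmas(2)[OF aJ] and mK = addhom_lemmas(2)[OF aK]
  show ij: "\<And>x. I (J x) = K x"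
  proof -
    fix x have "I (J (K (K x))) = - K x" by (rule IJK)
    thus "I (J x) = K x" using KK mI mJ by simp
  qed
  show ik: "\<And>x. I (K x) = - J x"
  proof -
    fix x have "I (I (J x)) = I (K x)" using ij by simp
    thus "I (K x) = - J x" using II by simp
  qed
  have jij: "\<And>x. J (I (J x)) = I x"
  proof -
    fix x have "I (J (I (J x))) = - x" using ij KK by simp
    hence "I (I (J (I (J x)))) = - I x" using mI by simp
    thus "J (I (J x)) = I x" using II by simp
  qed
  show ji: "\<And>x. J (I x) = - K x"
  proof -
    fix x have "J (I (J (J x))) = I (J x)" by (rule jij)
    thus "J (I x) = - K x" using JJ mI mJ ij by (metis minus_equation_iff)
  qed
  show jk: "\<And>x. J (K x) = I x"
  proof -
    fix x have "J (K x) = J (I (J x))" using ij by simp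
    thus "J (K x) = I x" using jij by simp
  qed
  show kj: "\<And>x. K (J x) = - I x"
  proof -
    fix x have "K (J x) = I (J (J x))" using ij by simp
    thus "K (J x) = - I x" using JJ mI by simp
  qed
  show "\<And>x. K (I x) = J x"
  proof -
    fix x have "K (I x) = - J (I (I x))" using ji mJ by (metis minus_minus)
    thus "K (I x) = J x" using II mJ by simp
  qed
qed

lemma nij_ids:
  fixes I J K :: "'e::ab_group_add \<Rightarrow> 'e" and dor :: "'e \<Rightarrow> 'e \<Rightarrow> 'e"
  assumes aI: "\<And>x y. I (x + y) = I x + I y"
    and aJ: "\<And>x y. J (x + y) = J x + J y"
    and aK: "\<And>x y. K (x + y) = K x + K y"
    and dl: "\<And>x y z. dor (x + y) z = dor x z + dor y z"
    and dr: "\<And>x y z. dor x (y + z) = dor x y + dor x z"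
    and II: "\<And>x. I (I x) = - x" and JJ: "\<And>x. J (J x) = - x" and KK: "\<And>x. K (K x) = - x"
    and IJK: "\<And>x. I (J (K x)) = - x"
  shows
   "nijenhuis dor I I X Y = nijenhuis dor I J X (K Y) - nijenhuis dor I J (I X) (J Y) + I (nijenhuis dor I J X (J Y)) + I (nijenhuis dor I J (I X) (K Y))"
   "nijenhuis dor J J X Y = - nijenhuis dor I J X (K Y) - nijenhuis dor I J (J X) (I Y) + J (nijenhuis dor I J X (I Y)) - J (nijenhuis dor I J (J X) (K Y))"
   "nijenhuis dor J K X Y = J (nijenhuis dor I J (J X) (J Y))"
   "nijenhuis dor K I X Y = - I (nijenhuis dor I J (I X) (I Y))"
   "nijenhuis dor K K X Y = - nijenhuis dor I J (I X) (J Y) + nijenhuis dor I J (J X) (I Y) - I (nijenhuis dor I J X (J Y)) - I (nijenhuis dor I J (I X) (K Y)) + (I (nijenhuis dor I J (J X) Y) + I (nijenhuis dor I J (J X) Y)) + J (nijenhuis dor I J X (I Y)) + J (nijenhuis dor I J (J X) (K Y))"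
   "nijenhuis dor I J X Y + nijenhuis dor I J X Y + nijenhuis dor I J X Y + nijenhuis dor I J X Y = - nijenhuis dor I I X (K Y) - nijenhuis dor I I (J X) (I Y) + J (nijenhuis dor I I X (I Y)) - J (nijenhuis dor I I (J X) (K Y)) + nijenhuis dor J J X (K Y) - nijenhuis dor J J (I X) (J Y) + I (nijenhuis dor J J X (J Y)) + I (nijenhuis dor J J (I X) (K Y))"
proof -
  note q = quat[OF aI aJ aK II JJ KK IJK]
  note hI = addhom_lemmas[OF aI] and hJ = addhom_lemmas[OF aJ] and hK = addhom_lemmas[OF aK]
  note hl = addhom_lemmas[of "\<lambda>x. dor x z" for z, OF dl]
  note hr = addhom_lemmas[of "dor z" for z, OF dr]
  note S = q hI hJ hK hl hr aI aJ aK dl dr II JJ KK nijenhuis_def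
  show "nijenhuis dor I I X Y = nijenhuis dor I J X (K Y) - nijenhuis dor I J (I X) (J Y) + I (nijenhuis dor I J X (J Y)) + I (nijenhuis dor I J (I X) (K Y))"
    by (simp add: S algebra_simps)
  show "nijenhuis dor J J X Y = - nijenhuis dor I J X (K Y) - nijenhuis dor I J (J X) (I Y) + J (nijenhuis dor I J X (I Y)) - J (nijenhuis dor I J (J X) (K Y))"
    by (simp add: S algebra_simps)
  show "nijenhuis dor J K X Y = J (nijenhuis dor I J (J X) (J Y))"
    by (simp add: S algebra_simps)
  show "nijenhuis dor K I X Y = - I (nijenhuis dor I J (I X) (I Y))"
    by (simp add: S algebra_simps)
  show "nijenhuis dor K K X Y = - nijenhuis dor I J (I X) (J Y) + nijenhuis dor I J (J X) (I Y) - I (nijenhuis dor I J X (J Y)) - I (nijenhuis dor I J (I X) (K Y)) + (I (nijenhuis dor I J (J X) Y) + I (nijenhuis dor I J (J X) Y)) + J (nijenhuis dor I J X (I Y)) + J (nijenhuis dor I J (J X) (K Y))"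
    by (simp add: S algebra_simps)
  show "nijenhuis dor I J X Y + nijenhuis dor I J X Y + nijenhuis dor I J X Y + nijenhuis dor I J X Y = - nijenhuis dor I I X (K Y) - nijenhuis dor I I (J X) (I Y) + J (nijenhuis dor I I X (I Y)) - J (nijenhuis dor I I (J X) (K Y)) + nijenhuis dor J J X (K Y) - nijenhuis dor J J (I X) (J Y) + I (nijenhuis dor J J X (J Y)) + I (nijenhuis dor J J (I X) (K Y))"
    by (simp add: S algebra_simps)
qed


lemma four_sc: "(4::real) *\<^sub>R (v::'a::real_vector) = v + v + v + v"
proof -
  have "(4::real) *\<^sub>R v = (1 + 1 + 1 + 1) *\<^sub>R v" by simp
  also have "\<dots> = v + v + v + v" by (simp only: scaleR_add_left scaleR_one)
  finally show ?thesis .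
qed

theorem mainTheorem9:
  fixes sm :: "'f::{comm_ring_1,real_algebra_1} \<Rightarrow> 'e::real_vector \<Rightarrow> 'e"
    and rho :: "'e \<Rightarrow> 'f \<Rightarrow> 'f" and pr :: "'e \<Rightarrow> 'e \<Rightarrow> 'f"
    and dor :: "'e \<Rightarrow> 'e \<Rightarrow> 'e" and I J K :: "'e \<Rightarrow> 'e"
  assumes "courant_algebroid sm rho pr dor"
    and "almost_hypercomplex sm pr I J K"
  shows "((nijenhuis_zero dor I I \<and> nijenhuis_zero dor J J) \<longleftrightarrow> nijenhuis_zero dor I J)
       \<and> (nijenhuis_zero dor I J \<longleftrightarrow>
           (nijenhuis_zero dor I I \<and> nijenhuis_zero dor J J \<and> nijenhuis_zero dor K K \<and>
            nijenhuis_zero dor I J \<and> nijenhuis_zero dor J K \<and> nijenhuis_zero dor K I))"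
proof -
  have dl: "\<And>x y z. dor (x + y) z = dor x z + dor y z"
    using assms(1) by (simp add: courant_algebroid_def)
  have dr: "\<And>x y z. dor x (y + z) = dor x y + dor x z"
    using assms(1) by (simp add: courant_algebroid_def)
  have aI: "\<And>x y. I (x + y) = I x + I y" and aJ: "\<And>x y. J (x + y) = J x + J y"
    and aK: "\<And>x y. K (x + y) = K x + K y"
    and II: "\<And>x. I (I x) = - x" and JJ: "\<And>x. J (J x) = - x" and KK: "\<And>x. K (K x) = - x"
    and IJK: "\<And>x. I (J (K x)) = - x"
    using assms(2) by (simp_all add: almost_hypercomplex_def bundle_endo_def)
  note N = nij_ids[OF aI aJ aK dl dr II JJ KK IJK]
  have I0: "I 0 = 0" and J0: "J 0 = 0" using addhom_lemmas(1)[OF aI] addhom_lemmas(1)[OF aJ] .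
  have A: "nijenhuis_zero dor I J" if "nijenhuis_zero dor I I" "nijenhuis_zero dor J J"
  proof -
    { fix X Y
      have "nijenhuis dor I J X Y + nijenhuis dor I J X Y + nijenhuis dor I J X Y + nijenhuis dor I J X Y = 0"
        using that N(6)[of X Y] I0 J0 unfolding nijenhuis_zero_def by simp
      moreover have "(4::real) *\<^sub>R nijenhuis dor I J X Y = nijenhuis dor I J X Y + nijenhuis dor I J X Y + nijenhuis dor I J X Y + nijenhuis dor I J X Y"
        by (simp only: four_sc)
      ultimately have "(4::real) *\<^sub>R nijenhuis dor I J X Y = 0" by simp
      hence "nijenhuis dor I J X Y = 0" by simp }
    thus ?thesis unfolding nijenhuis_zero_def by blast
  qed
  have B: "nijenhuis_zero dor I I \<and> nijenhuis_zero dor J J \<and> nijenhuis_zero dor K K \<and>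
            nijenhuis_zero dor J K \<and> nijenhuis_zero dor K I" if "nijenhuis_zero dor I J"
    using that N(1-5) I0 J0 unfolding nijenhuis_zero_def by simp
  show ?thesis using A B by blast
qed

end
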